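(* Let $(\Theta,\mathcal{B},\mu,\omega)$ be an ergodic metric dynamical system and let $\Psi:\mathbb{R}\times\Theta\times\mathbb{R}\to\Theta\times\mathbb{R}$, $(t,\theta,x)\mapsto(\theta\cdot t,\psi_t(\theta,x))$, be a measurable map satisfying the cocycle property $\psi_{t_1+t_2}(\theta,x)=\psi_{t_2}(\theta\cdot t_1,\psi_{t_1}(\theta,x))$ for all $t_1,t_2\in\mathbb{R}$, $\theta\in\Theta$, $x\in\mathbb{R}$. Assume: (i) $\psi_t(\theta,x+1)=\psi_t(\theta,x)+1$ for all $(t,\theta,x)\in\mathbb{R}\times\Theta\times\mathbb{R}$; (ii) there is a constant $C\ge0$ such that $\psi_t(\theta,x)\le\psi_t(\theta,x')+C$ for all $t\in\mathbb{R}$, $\theta\in\Theta$ and $x,x'\in\mathbb{R}$ with $x\le x'$; (iii) there is a constant $\eta\ge0$ such that $|\psi_t(\theta,x)-x|\le\eta$ for all $(t,\theta,x)\in[0,1]\times\Theta\times\mathbb{R}$. Then there exist a real number $\rho$ and a set $\Theta_0\subseteq\Theta$ with $\mu(\Theta_0)=1$ such that $$\lim_{t\to\infty}\frac{\psi_t(\theta,x)-x}{t}=\rho\quad\text{for all }(\theta,x)\in\Theta_0\times\mathbb{R}.$$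
   Context: A metric dynamical system $(\Theta,\mathcal{B},\mu,\omega)$ consists of a probability space $(\Theta,\mathcal{B},\mu)$ and a measurable flow $\omega:\mathbb{R}\times\Theta\to\Theta$, written $\omega_t(\theta)=\theta\cdot t$, with $\mu\circ\omega_t^{-1}=\mu$ for all $t\in\mathbb{R}$; it is ergodic if every invariant measurable set has measure $0$ or $1$. *)

theory Defs
  imports "HOL-Probability.Probability"
begin

text \<open>Metric dynamical system: probability space M with a measurable flow
  w (written w t \<theta> = \<theta>\<cdot>t) preserving the measure.\<close>
definition mds :: "'a measure \<Rightarrow> (real \<Rightarrow> 'a \<Rightarrow> 'a) \<Rightarrow> bool" where
  "mds M w \<longleftrightarrow> prob_space M
     \<and> (\<lambda>(t, \<theta>). w t \<theta>) \<in> borel \<Otimes>\<^sub>M M \<rightarrow>\<^sub>M M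
     \<and> (\<forall>\<theta>\<in>space M. w 0 \<theta> = \<theta>)
     \<and> (\<forall>s t. \<forall>\<theta>\<in>space M. w (s + t) \<theta> = w t (w s \<theta>))
     \<and> (\<forall>t. distr M M (w t) = M)"

definition flow_invariant :: "'a measure \<Rightarrow> (real \<Rightarrow> 'a \<Rightarrow> 'a) \<Rightarrow> 'a set \<Rightarrow> bool" where
  "flow_invariant M w A \<longleftrightarrow> A \<in> sets M \<and> (\<forall>t. w t -` A \<inter> space M = A)"

definition ergodic_mds :: "'a measure \<Rightarrow> (real \<Rightarrow> 'a \<Rightarrow> 'a) \<Rightarrow> bool" where
  "ergodic_mds M w \<longleftrightarrow> mds M w
     \<and> (\<forall>A. flow_invariant M w A \<longrightarrow> measure M A = 0 \<or> measure M A = 1)"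

end

theory Submission
  imports Defs
begin


lemma arith1: fixes x a1 y D A cy E s F cn c' :: real
  shows "x \<ge> a1 + y - D \<Longrightarrow> a1 \<ge> -2*A \<Longrightarrow> y \<ge> cy - Es - F \<Longrightarrow> cn = c' + cy
   \<Longrightarrow> c' \<le> E - 2*A - D \<Longrightarrow> x \<ge> cn - (E + Es) - F" by linarith

lemma arith2: fixes x a1 y D A cy E s F cn c' :: real
  shows "x \<ge> a1 + y - D \<Longrightarrow> a1 \<ge> kc \<Longrightarrow> y \<ge> cy - Es' - F \<Longrightarrow> cn = ck + cy
   \<Longrightarrow> kc - D \<ge> ck \<Longrightarrow> Es' \<le> Es \<Longrightarrow> x \<ge> cn - Es - F" by linarith

lemma KW:
  fixes M :: "'a measure" and S :: "nat \<Rightarrow> 'a \<Rightarrow> 'a" and a :: "nat \<Rightarrow> 'a \<Rightarrow> real"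
  assumes P: "prob_space M"
    and Sm: "\<And>n. S n \<in> M \<rightarrow>\<^sub>M M"
    and Sp: "\<And>n A. A \<in> sets M \<Longrightarrow> measure M (S n -` A \<inter> space M) = measure M A"
    and S0: "\<And>\<theta>. \<theta> \<in> space M \<Longrightarrow> S 0 \<theta> = \<theta>"
    and Sadd: "\<And>n m \<theta>. \<theta> \<in> space M \<Longrightarrow> S (n+m) \<theta> = S m (S n \<theta>)"
    and am: "\<And>n. a n \<in> borel_measurable M"
    and bnd: "\<And>n \<theta>. \<theta> \<in> space M \<Longrightarrow> \<bar>a n \<theta>\<bar> \<le> A * (real n + 1)"
    and sup: "\<And>n m \<theta>. \<theta> \<in> space M \<Longrightarrow> a (n+m) \<theta> \<ge> a n \<theta> + a m (S n \<theta>) - D"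
    and D: "D \<ge> 0"
    and ae: "AE \<theta> in M. \<forall>N. \<exists>k\<ge>N. a k \<theta> \<ge> real k * c"
    and e: "e > 0"
  shows "\<exists>N0. \<forall>n\<ge>N0. (\<integral>\<theta>. a n \<theta> \<partial>M) \<ge> real n * (c - e)"
proof -
  interpret prob_space M by (rule P)
  note am[measurable] Sm[measurable]
  have A0: "A \<ge> 0"
  proof -
    obtain \<theta> where "\<theta> \<in> space M" using not_empty by auto
    from bnd[OF this, of 0] show ?thesis by simp
  qed
  define Q :: nat where "Q = nat \<lceil>3 * D / e\<rceil> + 1"
  have Q1: "Q \<ge> 1" unfolding Q_def by simp
  have "3 * D / e \<le> real Q" unfolding Q_def by linarith
  hence QD: "D / real Q \<le> e / 3" using e Q1 by (simp add: field_simps)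
  define c' where "c' = c - D / real Q"
  define G where "G K = {\<theta>\<in>space M. \<exists>k\<in>{Q..K}. a k \<theta> \<ge> real k * c}" for K
  have Gm[measurable]: "G K \<in> sets M" for K unfolding G_def by measurable
  have Ginc: "incseq G" unfolding incseq_def G_def by force
  have lim: "(\<lambda>K. measure M (G K)) \<longlonglongrightarrow> measure M (\<Union>K. G K)"
    by (rule finite_Lim_measure_incseq) (use Ginc in auto)
  have "AE \<theta> in M. \<theta> \<in> (\<Union>K. G K)"
    using ae
  proof (rule AE_mp, intro AE_I2 impI)
    fix \<theta> assume th: "\<theta> \<in> space M" and h: "\<forall>N. \<exists>k\<ge>N. a k \<theta> \<ge> real k * c"
    then obtain k where "k \<ge> Q" "a k \<theta> \<ge> real k * c" by blast
    hence "\<theta> \<in> G k" using th unfolding G_def by auto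
    thus "\<theta> \<in> (\<Union>K. G K)" by blast
  qed
  hence U1: "measure M (\<Union>K. G K) = 1" by (subst prob_eq_1) auto
  define E where "E = 2 * A + D + \<bar>c'\<bar>"
  have E0: "E \<ge> 0" unfolding E_def using A0 D by simp
  have "eventually (\<lambda>K. measure M (G K) > 1 - e / (3 * (E + 1))) sequentially"
    using lim U1 e E0 by (intro order_tendstoD) auto
  then obtain K0 where K0: "\<And>K. K \<ge> K0 \<Longrightarrow> measure M (G K) > 1 - e / (3 * (E + 1))"
    by (auto simp: eventually_sequentially)
  define K where "K = max K0 Q"
  define B where "B = space M - G K"
  have Bm[measurable]: "B \<in> sets M" unfolding B_def by measurable
  have mB: "measure M B = 1 - measure M (G K)" unfolding B_def by (rule prob_compl) simp
  have "measure M (G K) > 1 - e / (3 * (E + 1))" using K0 K_def by simp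
  hence mB': "measure M B < e / (3 * (E + 1))" using mB by simp
  have EB: "E * measure M B \<le> e / 3"
  proof -
    have "E * measure M B \<le> E * (e / (3 * (E + 1)))" using mB' E0 by (intro mult_left_mono) auto
    also have "\<dots> = (e / 3) * (E / (E + 1))" by simp
    also have "\<dots> \<le> (e / 3) * 1" using E0 e by (intro mult_left_mono) auto
    finally show ?thesis by simp
  qed
  define F where "F = A * (real K + 1) + \<bar>c'\<bar> * real K"
  have F0: "F \<ge> A"
  proof -
    have "A * (real K + 1) = A * real K + A" by (simp add: algebra_simps)
    moreover have "A * real K \<ge> 0" "\<bar>c'\<bar> * real K \<ge> 0" using A0 by auto
    ultimately show ?thesis unfolding F_def by linarith
  qed
  have claim: "\<forall>\<theta>\<in>space M. a n \<theta> \<ge> c' * real n - E * (\<Sum>j<n. indicator B (S j \<theta>)) - F" for n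
  proof (induction n rule: less_induct)
    case (less n)
    show ?case
    proof
      fix \<theta> assume th: "\<theta> \<in> space M"
      have sum0: "(\<Sum>j<m. indicator B (S j \<theta>') :: real) \<ge> 0" for m \<theta>'
        by (intro sum_nonneg) auto
      show "a n \<theta> \<ge> c' * real n - E * (\<Sum>j<n. indicator B (S j \<theta>)) - F"
      proof (cases "n \<le> K")
        case True
        have "a n \<theta> \<ge> - A * (real n + 1)" using bnd[OF th, of n] by linarith
        moreover have "A * (real n + 1) \<le> A * (real K + 1)" using True A0 by (intro mult_left_mono) auto
        moreover have "c' * real n \<le> \<bar>c'\<bar> * real K"
        proof -
          have "c' * real n \<le> \<bar>c'\<bar> * real n" by (intro mult_right_mono) auto
          also have "\<dots> \<le> \<bar>c'\<bar> * real K" using True by (intro mult_left_mono) auto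
          finally show ?thesis .
        qed
        moreover have "E * (\<Sum>j<n. indicator B (S j \<theta>)) \<ge> 0" using E0 sum0 by simp
        ultimately show ?thesis unfolding F_def by linarith
      next
        case False
        show ?thesis
        proof (cases "\<theta> \<in> G K")
          case True
          then obtain k where k: "k \<in> {Q..K}" "a k \<theta> \<ge> real k * c" unfolding G_def by auto
          have kn: "k \<le> n" "k < n" using k False by auto
          have kpos: "k > 0" using k Q1 by auto
          have n_eq: "n = k + (n - k)" using kn by simp
          have thk: "S k \<theta> \<in> space M" by (rule measurable_space[OF Sm th])
          have IH: "a (n - k) (S k \<theta>) \<ge> c' * real (n - k) - E * (\<Sum>j<n-k. indicator B (S j (S k \<theta>))) - F"
          proof -
            have "n - k < n" using kpos kn by simp
            from less.IH[OF this] thk show ?thesis by blast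
          qed
          have s1: "(\<Sum>j<n-k. indicator B (S j (S k \<theta>)) :: real) \<le> (\<Sum>j<n. indicator B (S j \<theta>))"
          proof -
            have "(\<Sum>j<n-k. indicator B (S j (S k \<theta>)) :: real) = (\<Sum>j<n-k. indicator B (S (k + j) \<theta>))"
              using Sadd[OF th] by simp
            also have "\<dots> = (\<Sum>j\<in>(\<lambda>j. k + j) ` {..<n-k}. indicator B (S j \<theta>))"
              by (subst sum.reindex) (auto simp: inj_on_def)
            also have "\<dots> \<le> (\<Sum>j<n. indicator B (S j \<theta>))"
              by (intro sum_mono2) (auto simp: image_subset_iff)
            finally show ?thesis .
          qed
          have sp: "a n \<theta> \<ge> a k \<theta> + a (n - k) (S k \<theta>) - D"
            using sup[OF th, of k "n - k"] kn by simp
          have kc: "real k * c - D \<ge> c' * real k"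
          proof -
            have q: "D / real Q * real Q = D" using Q1 by simp
            have "D / real Q * real Q \<le> D / real Q * real k" using k D by (intro mult_left_mono) auto
            moreover have "c' * real k = real k * c - D / real Q * real k" unfolding c'_def by (simp add: algebra_simps)
            ultimately show ?thesis using q by linarith
          qed
          have "E * (\<Sum>j<n-k. indicator B (S j (S k \<theta>))) \<le> E * (\<Sum>j<n. indicator B (S j \<theta>))"
            using s1 E0 by (intro mult_left_mono) auto
          moreover have "c' * real n = c' * real k + c' * real (n - k)" using kn
            by (simp add: of_nat_diff algebra_simps)
          ultimately show ?thesis using arith2[OF sp k(2) IH _ kc] by blast
        next
          case notG: False
          have n1: "n = 1 + (n - 1)" using False by simp
          have th1: "S 1 \<theta> \<in> space M" by (rule measurable_space[OF Sm th])
          have IH: "a (n - 1) (S 1 \<theta>) \<ge> c' * real (n - 1) - E * (\<Sum>j<n-1. indicator B (S j (S 1 \<theta>))) - F"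
          proof -
            have "n - 1 < n" using False by simp
            from less.IH[OF this] th1 show ?thesis by blast
          qed
          have sp: "a n \<theta> \<ge> a 1 \<theta> + a (n - 1) (S 1 \<theta>) - D"
            using sup[OF th, of 1 "n - 1"] False by simp
          have a1: "a 1 \<theta> \<ge> - 2 * A" using bnd[OF th, of 1] by simp
          have "(\<Sum>j<n. indicator B (S j \<theta>) :: real) = (\<Sum>j<Suc (n-1). indicator B (S j \<theta>))"
            using False by simp
          also have "\<dots> = indicator B (S 0 \<theta>) + (\<Sum>j<n-1. indicator B (S (Suc j) \<theta>))"
            by (rule sum.lessThan_Suc_shift)
          also have "\<dots> = 1 + (\<Sum>j<n-1. indicator B (S j (S 1 \<theta>)))"
          proof -
            have i1: "indicator B (S 0 \<theta>) = (1::real)" using S0[OF th] th notG by (simp add: B_def)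
            have i2: "S (Suc j) \<theta> = S j (S 1 \<theta>)" for j using Sadd[OF th, of 1 j] by simp
            show ?thesis by (simp only: i1 i2)
          qed
          finally have ss: "(\<Sum>j<n. indicator B (S j \<theta>) :: real) = 1 + (\<Sum>j<n-1. indicator B (S j (S 1 \<theta>)))" .
          have "c' * real n = c' + c' * real (n - 1)" using False by (simp add: of_nat_diff algebra_simps)
          moreover have "c' \<le> E - 2 * A - D" unfolding E_def by simp
          moreover have "E * (1 + (\<Sum>j<n-1. indicator B (S j (S 1 \<theta>)))) = E + E * (\<Sum>j<n-1. indicator B (S j (S 1 \<theta>)))"
            by (simp add: algebra_simps)
          ultimately have "a n \<theta> \<ge> c' * real n - (E + E * (\<Sum>j<n-1. indicator B (S j (S 1 \<theta>)))) - F"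
            by (intro arith1[OF sp a1 IH]) auto
          thus ?thesis unfolding ss distrib_left by simp
        qed
      qed
    qed
  qed
  have aint: "integrable M (a n)" for n
    by (rule integrable_const_bound[where B="A*(real n+1)"]) (use bnd in auto)
  have iint: "integrable M (\<lambda>\<theta>. indicator B (S j \<theta>) :: real)" for j
    by (rule integrable_const_bound[where B=1]) (auto simp: indicator_def)
  have int_ind: "(\<integral>\<theta>. indicator B (S j \<theta>) \<partial>M) = measure M B" for j
  proof -
    have "(\<integral>\<theta>. indicator B (S j \<theta>) \<partial>M) = (\<integral>\<theta>. indicator (S j -` B \<inter> space M) \<theta> \<partial>M)"
      by (rule Bochner_Integration.integral_cong[OF refl]) (auto simp: indicator_def)
    also have "\<dots> = measure M (S j -` B \<inter> space M)" by (simp add: Int_assoc)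
    also have "\<dots> = measure M B" by (rule Sp[OF Bm])
    finally show ?thesis .
  qed
  have intf: "(\<integral>\<theta>. (c' * real n - E * (\<Sum>j<n. indicator B (S j \<theta>)) - F) \<partial>M)
      = c' * real n - E * (real n * measure M B) - F" for n
  proof -
    have "(\<integral>\<theta>. (c' * real n - E * (\<Sum>j<n. indicator B (S j \<theta>)) - F) \<partial>M)
       = c' * real n - E * (\<Sum>j<n. (\<integral>\<theta>. indicator B (S j \<theta>) \<partial>M)) - F"
      using iint by (simp add: integral_sum prob_space)
    thus ?thesis by (simp add: int_ind)
  qed
  have lower: "(\<integral>\<theta>. a n \<theta> \<partial>M) \<ge> c' * real n - E * (real n * measure M B) - F" for n
  proof -
    have "(\<integral>\<theta>. (c' * real n - E * (\<Sum>j<n. indicator B (S j \<theta>)) - F) \<partial>M) \<le> (\<integral>\<theta>. a n \<theta> \<partial>M)"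
      using claim[of n] aint[of n] iint by (intro integral_mono) auto
    thus ?thesis using intf by simp
  qed
  define N0 where "N0 = nat \<lceil>3 * F / e\<rceil>"
  show ?thesis
  proof (intro exI allI impI)
    fix n assume n: "N0 \<le> n"
    have "3 * F / e \<le> real n" using n unfolding N0_def by linarith
    hence Fn: "F \<le> real n * (e / 3)" using e by (simp add: field_simps)
    have t1: "E * (real n * measure M B) \<le> real n * (e / 3)"
    proof -
      have "E * (real n * measure M B) = real n * (E * measure M B)" by (simp add: algebra_simps)
      also have "\<dots> \<le> real n * (e / 3)" using EB by (intro mult_left_mono) auto
      finally show ?thesis .
    qed
    have t2: "real n * (D / real Q) \<le> real n * (e / 3)" using QD by (intro mult_left_mono) auto
    have "real n * (c - e) = c' * real n - (real n * (e/3) - real n * (D / real Q)) - real n * (e/3) - real n * (e/3)"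
      unfolding c'_def by (simp add: algebra_simps)
    also have "\<dots> \<le> c' * real n - E * (real n * measure M B) - F" using Fn t1 t2 by linarith
    also have "\<dots> \<le> (\<integral>\<theta>. a n \<theta> \<partial>M)" by (rule lower)
    finally show "real n * (c - e) \<le> (\<integral>\<theta>. a n \<theta> \<partial>M)" .
  qed
qed


definition Wp :: "(nat \<Rightarrow> real) \<Rightarrow> real \<Rightarrow> bool" where
  "Wp x c \<longleftrightarrow> (\<forall>e>0. \<forall>N. \<exists>k\<ge>N. x k \<ge> real k * (c - e))"

lemma Wp_count: "Wp x c \<longleftrightarrow> (\<forall>j::nat. \<forall>N. \<exists>k\<ge>N. x k \<ge> real k * (c - 1 / real (Suc j)))"
proof
  assume "Wp x c" thus "\<forall>j::nat. \<forall>N. \<exists>k\<ge>N. x k \<ge> real k * (c - 1 / real (Suc j))"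
    unfolding Wp_def by simp
next
  assume h: "\<forall>j::nat. \<forall>N. \<exists>k\<ge>N. x k \<ge> real k * (c - 1 / real (Suc j))"
  show "Wp x c" unfolding Wp_def
  proof (intro allI impI)
    fix e :: real and N assume e: "e > 0"
    obtain j where j: "1 / real (Suc j) < e"
      using reals_Archimedean e by (metis inverse_eq_divide)
    obtain k where k: "k \<ge> N" "x k \<ge> real k * (c - 1 / real (Suc j))" using h by blast
    have "real k * (c - e) \<le> real k * (c - 1 / real (Suc j))" using j by (intro mult_left_mono) auto
    thus "\<exists>k\<ge>N. x k \<ge> real k * (c - e)" using k by (intro exI[of _ k]) auto
  qed
qed

lemma Wp_mono: "c' \<le> c \<Longrightarrow> Wp x c \<Longrightarrow> Wp x c'"
  unfolding Wp_def
proof (intro allI impI)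
  fix e :: real and N assume c: "c' \<le> c" and h: "\<forall>e>0. \<forall>N. \<exists>k\<ge>N. real k * (c - e) \<le> x k" and e: "e > 0"
  then obtain k where k: "k \<ge> N" "x k \<ge> real k * (c - e)" by blast
  have "real k * (c' - e) \<le> real k * (c - e)" using c by (intro mult_left_mono) auto
  thus "\<exists>k\<ge>N. real k * (c' - e) \<le> x k" using k by (intro exI[of _ k]) auto
qed

lemma shift_core:
  fixes K m :: nat and R c e :: real
  assumes e: "e > 0" and K: "real K \<ge> 2 * (R + real m * \<bar>c - e\<bar>) / e"
  shows "real K * (c - e / 2) - R \<ge> real K * (c - e) + \<bar>real m * (c - e)\<bar>"
proof -
  have "real K * e \<ge> 2 * (R + real m * \<bar>c - e\<bar>)" using K e by (simp add: field_simps)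
  hence "real K * e / 2 \<ge> R + real m * \<bar>c - e\<bar>" by simp
  moreover have "\<bar>real m * (c - e)\<bar> = real m * \<bar>c - e\<bar>" by (simp add: abs_mult)
  moreover have "real K * (c - e / 2) = real K * (c - e) + real K * e / 2" by (simp add: algebra_simps)
  ultimately show ?thesis by linarith
qed

lemma Wp_shift1:
  assumes h: "\<And>k. \<bar>x k - y (k + m)\<bar> \<le> R" and W: "Wp x c"
  shows "Wp y c"
  unfolding Wp_def
proof (intro allI impI)
  fix e :: real and N assume e: "e > 0"
  define K0 where "K0 = max N (nat \<lceil>2 * (R + real m * \<bar>c - e\<bar>) / e\<rceil>)"
  obtain k where k: "k \<ge> K0" "x k \<ge> real k * (c - e / 2)" using W e unfolding Wp_def
    by (metis half_gt_zero)
  have kb: "real k \<ge> 2 * (R + real m * \<bar>c - e\<bar>) / e" using k(1) unfolding K0_def by linarith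
  have core: "real k * (c - e / 2) - R \<ge> real k * (c - e) + \<bar>real m * (c - e)\<bar>"
    by (rule shift_core[OF e kb])
  have "real (k + m) * (c - e) = real k * (c - e) + real m * (c - e)" by (simp add: algebra_simps)
  moreover have "real m * (c - e) \<le> \<bar>real m * (c - e)\<bar>" by simp
  moreover have "y (k + m) \<ge> x k - R" using h[of k] by linarith
  ultimately have "y (k + m) \<ge> real (k + m) * (c - e)" using core k(2) by linarith
  moreover have "k + m \<ge> N" using k(1) unfolding K0_def by simp
  ultimately show "\<exists>k\<ge>N. y k \<ge> real k * (c - e)" by blast
qed

lemma Wp_shift2:
  assumes h: "\<And>k. \<bar>x k - y (k + m)\<bar> \<le> R" and W: "Wp y c"
  shows "Wp x c"
  unfolding Wp_def
proof (intro allI impI)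
  fix e :: real and N assume e: "e > 0"
  define K0 where "K0 = N + m + (nat \<lceil>2 * (R + real m * \<bar>c - e\<bar>) / e\<rceil>)"
  obtain k' where k': "k' \<ge> K0" "y k' \<ge> real k' * (c - e / 2)" using W e unfolding Wp_def
    by (metis half_gt_zero)
  have kb: "real k' \<ge> 2 * (R + real m * \<bar>c - e\<bar>) / e" using k'(1) unfolding K0_def by linarith
  have core: "real k' * (c - e / 2) - R \<ge> real k' * (c - e) + \<bar>real m * (c - e)\<bar>"
    by (rule shift_core[OF e kb])
  define k where "k = k' - m"
  have kk: "k' = k + m" "k \<ge> N" using k'(1) unfolding k_def K0_def by auto
  have "real k' * (c - e) = real k * (c - e) + real m * (c - e)" using kk by (simp add: algebra_simps)
  moreover have "- (real m * (c - e)) \<le> \<bar>real m * (c - e)\<bar>" by simp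
  moreover have "x k \<ge> y k' - R" using h[of k] kk by (simp add: abs_le_iff)
  ultimately have "x k \<ge> real k * (c - e)" using core k'(2) by linarith
  thus "\<exists>k\<ge>N. x k \<ge> real k * (c - e)" using kk by blast
qed

lemma Wp_shift:
  assumes h: "\<And>k. \<bar>x k - y (k + m)\<bar> \<le> R"
  shows "Wp x c \<longleftrightarrow> Wp y c"
  using Wp_shift1[of x y m R c] Wp_shift2[of x y m R c] h by blast

lemma Lstar:
  fixes W :: "real \<Rightarrow> 'a set"
  assumes P: "prob_space M" and Wm: "\<And>c. W c \<in> sets M"
    and anti: "\<And>c c'. c \<le> c' \<Longrightarrow> W c' \<subseteq> W c"
    and dich: "\<And>c. measure M (W c) = 0 \<or> measure M (W c) = 1"
    and cz: "measure M (W cz) = 1" and up: "\<And>c. measure M (W c) = 1 \<Longrightarrow> c \<le> U"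
  shows "\<exists>L. (\<forall>c<L. measure M (W c) = 1) \<and> (\<forall>c>L. measure M (W c) = 0)"
proof -
  interpret prob_space M by (rule P)
  define L where "L = Sup {c. measure M (W c) = 1}"
  have bdd: "bdd_above {c. measure M (W c) = 1}" by (rule bdd_aboveI[where M=U]) (use up in auto)
  have ne: "{c. measure M (W c) = 1} \<noteq> {}" using cz by auto
  show ?thesis
  proof (intro exI conjI allI impI)
    fix c assume "c < L"
    then obtain c' where c': "measure M (W c') = 1" "c < c'"
      using less_cSup_iff[OF ne bdd] unfolding L_def by auto
    have "measure M (W c') \<le> measure M (W c)"
      using anti[of c c'] c' Wm by (intro finite_measure_mono) auto
    thus "measure M (W c) = 1" using c' dich[of c] by auto
  next
    fix c assume "c > L"
    have "measure M (W c) \<noteq> 1"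
    proof
      assume "measure M (W c) = 1"
      hence "c \<le> L" unfolding L_def using bdd by (intro cSup_upper) auto
      thus False using \<open>c > L\<close> by simp
    qed
    thus "measure M (W c) = 0" using dich[of c] by auto
  qed
qed



theorem theorem3p1:
  fixes M :: "'a measure" and w :: "real \<Rightarrow> 'a \<Rightarrow> 'a"
    and \<psi> :: "real \<Rightarrow> 'a \<Rightarrow> real \<Rightarrow> real"
  assumes erg: "ergodic_mds M w"
    and meas: "(\<lambda>(t, \<theta>, x). (w t \<theta>, \<psi> t \<theta> x)) \<in> borel \<Otimes>\<^sub>M (M \<Otimes>\<^sub>M borel) \<rightarrow>\<^sub>M M \<Otimes>\<^sub>M borel"
    and cocycle: "\<And>t1 t2 \<theta> x. \<theta> \<in> space M \<Longrightarrow>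
                    \<psi> (t1 + t2) \<theta> x = \<psi> t2 (w t1 \<theta>) (\<psi> t1 \<theta> x)"
    and per: "\<And>t \<theta> x. \<theta> \<in> space M \<Longrightarrow> \<psi> t \<theta> (x + 1) = \<psi> t \<theta> x + 1"
    and mono: "\<exists>C\<ge>0. \<forall>t. \<forall>\<theta>\<in>space M. \<forall>x x'. x \<le> x' \<longrightarrow> \<psi> t \<theta> x \<le> \<psi> t \<theta> x' + C"
    and bdd: "\<exists>\<eta>\<ge>0. \<forall>t\<in>{0..1}. \<forall>\<theta>\<in>space M. \<forall>x. \<bar>\<psi> t \<theta> x - x\<bar> \<le> \<eta>"
  shows "\<exists>\<rho>::real. \<exists>\<Theta>0. \<Theta>0 \<subseteq> space M \<and> \<Theta>0 \<in> sets M \<and> measure M \<Theta>0 = 1 \<and>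
           (\<forall>\<theta>\<in>\<Theta>0. \<forall>x. ((\<lambda>t. (\<psi> t \<theta> x - x) / t) \<longlongrightarrow> \<rho>) at_top)"
proof -
  have mds: "mds M w" and ergA: "\<And>A. flow_invariant M w A \<Longrightarrow> measure M A = 0 \<or> measure M A = 1"
    using erg unfolding ergodic_mds_def by auto
  have P: "prob_space M" and wm: "(\<lambda>(t, \<theta>). w t \<theta>) \<in> borel \<Otimes>\<^sub>M M \<rightarrow>\<^sub>M M"
    and w0: "\<And>\<theta>. \<theta> \<in> space M \<Longrightarrow> w 0 \<theta> = \<theta>"
    and wadd: "\<And>s t \<theta>. \<theta> \<in> space M \<Longrightarrow> w (s + t) \<theta> = w t (w s \<theta>)"
    and wd: "\<And>t. distr M M (w t) = M"
    using mds unfolding mds_def by auto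
  interpret prob_space M by (rule P)
  obtain C where C0: "C \<ge> 0" and monoC: "\<And>t \<theta> x x'. \<theta> \<in> space M \<Longrightarrow> x \<le> x' \<Longrightarrow> \<psi> t \<theta> x \<le> \<psi> t \<theta> x' + C"
    using mono by blast
  obtain \<eta> where \<eta>0: "\<eta> \<ge> 0" and bddH: "\<forall>t\<in>{0..1}. \<forall>\<theta>\<in>space M. \<forall>x. \<bar>\<psi> t \<theta> x - x\<bar> \<le> \<eta>"
    using bdd by blast
  have bddE: "\<And>t \<theta> x. 0 \<le> t \<Longrightarrow> t \<le> 1 \<Longrightarrow> \<theta> \<in> space M \<Longrightarrow> \<bar>\<psi> t \<theta> x - x\<bar> \<le> \<eta>"
    using bddH by simp
  define D where "D = C + 1"
  have wtm[measurable]: "w t \<in> M \<rightarrow>\<^sub>M M" for t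
  proof -
    have "(\<lambda>\<theta>. (\<lambda>(t, \<theta>). w t \<theta>) (t, \<theta>)) \<in> M \<rightarrow>\<^sub>M M"
      by (rule measurable_compose[OF measurable_Pair1' wm]) simp
    thus ?thesis by simp
  qed
  have wsp: "\<And>t \<theta>. \<theta> \<in> space M \<Longrightarrow> w t \<theta> \<in> space M" by (rule measurable_space[OF wtm])
  have wpres: "\<And>t A. A \<in> sets M \<Longrightarrow> measure M (w t -` A \<inter> space M) = measure M A"
  proof -
    fix t A assume A: "A \<in> sets M"
    have "measure (distr M M (w t)) A = measure M (w t -` A \<inter> space M)" by (rule measure_distr[OF wtm A])
    thus "measure M (w t -` A \<inter> space M) = measure M A" using wd[of t] by simp
  qed
  have psim[measurable]: "(\<lambda>\<theta>. \<psi> t \<theta> y) \<in> borel_measurable M" for t y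
  proof -
    have m1: "(\<lambda>\<theta>. (t, (\<theta>, y))) \<in> M \<rightarrow>\<^sub>M borel \<Otimes>\<^sub>M (M \<Otimes>\<^sub>M borel)" by measurable
    have "(\<lambda>\<theta>. snd ((\<lambda>(t, \<theta>, x). (w t \<theta>, \<psi> t \<theta> x)) (t, \<theta>, y))) \<in> borel_measurable M"
      by (rule measurable_compose[OF measurable_compose[OF m1 meas] measurable_snd])
    thus ?thesis by simp
  qed
  have per_nat: "\<And>t \<theta> x. \<theta> \<in> space M \<Longrightarrow> \<psi> t \<theta> (x + real k) = \<psi> t \<theta> x + real k" for k :: nat
  proof (induction k)
    case 0 thus ?case by simp
  next
    case (Suc k)
    have "\<psi> t \<theta> (x + real (Suc k)) = \<psi> t \<theta> ((x + real k) + 1)" by (simp add: algebra_simps)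
    also have "\<dots> = \<psi> t \<theta> x + real k + 1" using per[OF Suc.prems] Suc.IH[OF Suc.prems] by simp
    finally show ?case by simp
  qed
  have per_int: "\<And>t \<theta> x. \<theta> \<in> space M \<Longrightarrow> \<psi> t \<theta> (x + real_of_int k) = \<psi> t \<theta> x + real_of_int k" for k :: int
  proof (cases "k \<ge> 0")
    case True
    fix t \<theta> x assume th: "\<theta> \<in> space M"
    have k: "real_of_int k = real (nat k)" using True by simp
    show "\<psi> t \<theta> (x + real_of_int k) = \<psi> t \<theta> x + real_of_int k" unfolding k by (rule per_nat[OF th])
  next
    case False
    fix t \<theta> x assume th: "\<theta> \<in> space M"
    define n where "n = nat (-k)"
    have k: "real_of_int k = - real n" using False unfolding n_def by simp
    have "\<psi> t \<theta> x = \<psi> t \<theta> ((x - real n) + real n)" by simp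
    also have "\<dots> = \<psi> t \<theta> (x - real n) + real n" by (rule per_nat[OF th])
    finally show "\<psi> t \<theta> (x + real_of_int k) = \<psi> t \<theta> x + real_of_int k" unfolding k by simp
  qed
  have disp: "\<And>t \<theta> y. \<theta> \<in> space M \<Longrightarrow> \<bar>\<psi> t \<theta> y - y - \<psi> t \<theta> 0\<bar> \<le> D"
  proof -
    fix t \<theta> y assume th: "\<theta> \<in> space M"
    define r where "r = y - real_of_int \<lfloor>y\<rfloor>"
    have r: "0 \<le> r" "r \<le> 1" unfolding r_def by linarith+
    have "\<psi> t \<theta> y = \<psi> t \<theta> (r + real_of_int \<lfloor>y\<rfloor>)" unfolding r_def by simp
    also have "\<dots> = \<psi> t \<theta> r + real_of_int \<lfloor>y\<rfloor>" by (rule per_int[OF th])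
    finally have eq: "\<psi> t \<theta> y = \<psi> t \<theta> r + real_of_int \<lfloor>y\<rfloor>" .
    have l: "\<psi> t \<theta> 0 \<le> \<psi> t \<theta> r + C" using monoC[OF th r(1)] .
    have u: "\<psi> t \<theta> r \<le> \<psi> t \<theta> 1 + C" using monoC[OF th r(2)] .
    have one: "\<psi> t \<theta> 1 = \<psi> t \<theta> 0 + 1" using per[OF th, of t 0] by simp
    show "\<bar>\<psi> t \<theta> y - y - \<psi> t \<theta> 0\<bar> \<le> D" using eq l u one r unfolding D_def r_def by linarith
  qed
  have D1: "D \<ge> 1" unfolding D_def using C0 by simp
  define a where "a n \<theta> = \<psi> (real n) \<theta> 0" for n \<theta>
  have am[measurable]: "a n \<in> borel_measurable M" for n unfolding a_def by measurable
  define S where "S n = w (real n)" for n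
  have Sm: "S n \<in> M \<rightarrow>\<^sub>M M" for n unfolding S_def by (rule wtm)
  have Sp: "\<And>n A. A \<in> sets M \<Longrightarrow> measure M (S n -` A \<inter> space M) = measure M A"
    unfolding S_def by (rule wpres)
  have S0: "\<And>\<theta>. \<theta> \<in> space M \<Longrightarrow> S 0 \<theta> = \<theta>" unfolding S_def using w0 by simp
  have Sadd: "\<And>n m \<theta>. \<theta> \<in> space M \<Longrightarrow> S (n+m) \<theta> = S m (S n \<theta>)"
    unfolding S_def using wadd by simp
  have Ssp: "\<And>n \<theta>. \<theta> \<in> space M \<Longrightarrow> S n \<theta> \<in> space M" unfolding S_def by (rule wsp)
  have aadd: "\<And>n m \<theta>. \<theta> \<in> space M \<Longrightarrow> \<bar>a (n+m) \<theta> - a n \<theta> - a m (S n \<theta>)\<bar> \<le> D"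
  proof -
    fix n m \<theta> assume th: "\<theta> \<in> space M"
    have "\<psi> (real (n+m)) \<theta> 0 = \<psi> (real m) (w (real n) \<theta>) (\<psi> (real n) \<theta> 0)"
      using cocycle[OF th, of "real n" "real m" 0] by simp
    moreover have "\<bar>\<psi> (real m) (w (real n) \<theta>) (\<psi> (real n) \<theta> 0) - \<psi> (real n) \<theta> 0 - \<psi> (real m) (w (real n) \<theta>) 0\<bar> \<le> D"
      by (rule disp[OF wsp[OF th]])
    ultimately show "\<bar>a (n+m) \<theta> - a n \<theta> - a m (S n \<theta>)\<bar> \<le> D" unfolding a_def S_def by simp
  qed
  have rt: "\<And>t \<theta> x. \<theta> \<in> space M \<Longrightarrow> 0 \<le> t \<Longrightarrow> \<bar>\<psi> t \<theta> x - x - a (nat \<lfloor>t\<rfloor>) \<theta>\<bar> \<le> \<eta> + D"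
  proof -
    fix t :: real and \<theta> x assume th: "\<theta> \<in> space M" and t: "0 \<le> t"
    define n where "n = nat \<lfloor>t\<rfloor>"
    have rn: "real n = real_of_int \<lfloor>t\<rfloor>" unfolding n_def using t by simp
    have n1: "real n \<le> t" "t \<le> real n + 1" unfolding rn by linarith+
    have "\<psi> t \<theta> x = \<psi> (real n + (t - real n)) \<theta> x" by simp
    also have "\<dots> = \<psi> (t - real n) (w (real n) \<theta>) (\<psi> (real n) \<theta> x)" by (rule cocycle[OF th])
    finally have e1: "\<psi> t \<theta> x = \<psi> (t - real n) (w (real n) \<theta>) (\<psi> (real n) \<theta> x)" .
    have e2: "\<bar>\<psi> (t - real n) (w (real n) \<theta>) (\<psi> (real n) \<theta> x) - \<psi> (real n) \<theta> x\<bar> \<le> \<eta>"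
      using n1 by (intro bddE wsp th) auto
    have e3: "\<bar>\<psi> (real n) \<theta> x - x - \<psi> (real n) \<theta> 0\<bar> \<le> D" by (rule disp[OF th])
    show "\<bar>\<psi> t \<theta> x - x - a (nat \<lfloor>t\<rfloor>) \<theta>\<bar> \<le> \<eta> + D"
      using e1 e2 e3 unfolding a_def n_def[symmetric] by linarith
  qed
  define A where "A = \<eta> + D"
  have abnd: "\<And>\<theta>. \<theta> \<in> space M \<Longrightarrow> \<bar>a n \<theta>\<bar> \<le> A * (real n + 1)" for n
  proof (induction n)
    case 0
    have "\<bar>\<psi> 0 \<theta> 0 - 0\<bar> \<le> \<eta>" by (rule bddE) (use 0 in auto)
    thus ?case unfolding a_def A_def using D1 by simp
  next
    case (Suc n)
    have h1: "\<bar>a (n+1) \<theta> - a n \<theta> - a 1 (S n \<theta>)\<bar> \<le> D" by (rule aadd[OF Suc.prems])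
    have "\<bar>\<psi> 1 (S n \<theta>) 0 - 0\<bar> \<le> \<eta>" by (rule bddE) (use Ssp[OF Suc.prems] in auto)
    hence h2: "\<bar>a 1 (S n \<theta>)\<bar> \<le> \<eta>" unfolding a_def by simp
    have h3: "\<bar>a n \<theta>\<bar> \<le> A * (real n + 1)" by (rule Suc.IH[OF Suc.prems])
    have "A * (real (Suc n) + 1) = A * (real n + 1) + \<eta> + D" unfolding A_def by (simp add: algebra_simps)
    thus ?case using h1 h2 h3 by simp
  qed
  have ashift: "\<And>\<theta> s k. \<theta> \<in> space M \<Longrightarrow> 0 \<le> s \<Longrightarrow>
      \<bar>a k (w s \<theta>) - a (k + nat \<lfloor>s\<rfloor>) \<theta>\<bar> \<le> 2 * D + \<eta> + \<bar>\<psi> s \<theta> 0\<bar>"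
  proof -
    fix \<theta> and s :: real and k assume th: "\<theta> \<in> space M" and s: "0 \<le> s"
    have e1: "\<psi> (s + real k) \<theta> 0 = \<psi> (real k) (w s \<theta>) (\<psi> s \<theta> 0)" by (rule cocycle[OF th])
    have e2: "\<bar>\<psi> (real k) (w s \<theta>) (\<psi> s \<theta> 0) - \<psi> s \<theta> 0 - \<psi> (real k) (w s \<theta>) 0\<bar> \<le> D"
      by (rule disp[OF wsp[OF th]])
    have e3: "\<bar>\<psi> (s + real k) \<theta> 0 - 0 - a (nat \<lfloor>s + real k\<rfloor>) \<theta>\<bar> \<le> \<eta> + D"
      using s by (intro rt th) simp
    have "\<lfloor>s\<rfloor> \<ge> 0" using s by simp
    hence fl: "nat \<lfloor>s + real k\<rfloor> = k + nat \<lfloor>s\<rfloor>" by (simp add: nat_add_distrib)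
    show "\<bar>a k (w s \<theta>) - a (k + nat \<lfloor>s\<rfloor>) \<theta>\<bar> \<le> 2 * D + \<eta> + \<bar>\<psi> s \<theta> 0\<bar>"
      using e1 e2 e3 unfolding fl unfolding a_def by linarith
  qed
  define na where "na n \<theta> = - a n \<theta>" for n \<theta>
  have nam[measurable]: "na n \<in> borel_measurable M" for n unfolding na_def by measurable
  have shA: "\<exists>m R. \<forall>k. \<bar>a k (w s \<theta>) - a (k+m) \<theta>\<bar> \<le> R" if "\<theta> \<in> space M" "0 \<le> s" for \<theta> s
    using ashift[OF that] by blast
  have shN: "\<exists>m R. \<forall>k. \<bar>na k (w s \<theta>) - na (k+m) \<theta>\<bar> \<le> R" if hh: "\<theta> \<in> space M" "0 \<le> s" for \<theta> s
  proof -
    obtain m R where "\<forall>k. \<bar>a k (w s \<theta>) - a (k+m) \<theta>\<bar> \<le> R" using shA[OF hh] by blast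
    hence "\<forall>k. \<bar>na k (w s \<theta>) - na (k+m) \<theta>\<bar> \<le> R" unfolding na_def by (simp add: abs_minus_commute)
    thus ?thesis by blast
  qed
  have WSm: "{\<theta>\<in>space M. Wp (\<lambda>k. b k \<theta>) c} \<in> sets M" if bm: "\<And>k. b k \<in> borel_measurable M" for b c
  proof -
    note bm[measurable]
    have "{\<theta>\<in>space M. Wp (\<lambda>k. b k \<theta>) c} = {\<theta>\<in>space M. \<forall>j::nat. \<forall>N. \<exists>k\<ge>N. b k \<theta> \<ge> real k * (c - 1 / real (Suc j))}"
      by (simp add: Wp_count)
    also have "\<dots> \<in> sets M" by measurable
    finally show ?thesis .
  qed
  have WSinv: "flow_invariant M w {\<theta>\<in>space M. Wp (\<lambda>k. b k \<theta>) c}"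
    if bm: "\<And>k. b k \<in> borel_measurable M"
    and bsh: "\<And>\<theta> s. \<theta> \<in> space M \<Longrightarrow> 0 \<le> s \<Longrightarrow> \<exists>m R. \<forall>k. \<bar>b k (w s \<theta>) - b (k+m) \<theta>\<bar> \<le> R" for b c
    unfolding flow_invariant_def
  proof (intro conjI allI WSm[OF bm])
    fix t
    show "w t -` {\<theta> \<in> space M. Wp (\<lambda>k. b k \<theta>) c} \<inter> space M = {\<theta> \<in> space M. Wp (\<lambda>k. b k \<theta>) c}"
    proof (intro set_eqI iffI)
      fix \<theta> assume "\<theta> \<in> w t -` {\<theta> \<in> space M. Wp (\<lambda>k. b k \<theta>) c} \<inter> space M"
      hence th: "\<theta> \<in> space M" and W: "Wp (\<lambda>k. b k (w t \<theta>)) c" by auto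
      have "Wp (\<lambda>k. b k \<theta>) c"
      proof (cases "0 \<le> t")
        case True
        obtain m R where h: "\<forall>k. \<bar>b k (w t \<theta>) - b (k+m) \<theta>\<bar> \<le> R" using bsh[OF th True] by blast
        show ?thesis using Wp_shift[of "\<lambda>k. b k (w t \<theta>)" "\<lambda>k. b k \<theta>" m R c] h W by blast
      next
        case False
        have th': "w t \<theta> \<in> space M" by (rule wsp[OF th])
        have wback: "w (-t) (w t \<theta>) = \<theta>" using wadd[OF th, of t "-t"] w0[OF th] by simp
        obtain m R where h: "\<forall>k. \<bar>b k (w (-t) (w t \<theta>)) - b (k+m) (w t \<theta>)\<bar> \<le> R"
          using bsh[OF th'] False by fastforce
        hence h': "\<forall>k. \<bar>b k \<theta> - b (k+m) (w t \<theta>)\<bar> \<le> R" unfolding wback .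
        show ?thesis using Wp_shift[of "\<lambda>k. b k \<theta>" "\<lambda>k. b k (w t \<theta>)" m R c] h' W by blast
      qed
      thus "\<theta> \<in> {\<theta> \<in> space M. Wp (\<lambda>k. b k \<theta>) c}" using th by simp
    next
      fix \<theta> assume "\<theta> \<in> {\<theta> \<in> space M. Wp (\<lambda>k. b k \<theta>) c}"
      hence th: "\<theta> \<in> space M" and W: "Wp (\<lambda>k. b k \<theta>) c" by auto
      have th': "w t \<theta> \<in> space M" by (rule wsp[OF th])
      have "Wp (\<lambda>k. b k (w t \<theta>)) c"
      proof (cases "0 \<le> t")
        case True
        obtain m R where h: "\<forall>k. \<bar>b k (w t \<theta>) - b (k+m) \<theta>\<bar> \<le> R" using bsh[OF th True] by blast
        show ?thesis using Wp_shift[of "\<lambda>k. b k (w t \<theta>)" "\<lambda>k. b k \<theta>" m R c] h W by blast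
      next
        case False
        have wback: "w (-t) (w t \<theta>) = \<theta>" using wadd[OF th, of t "-t"] w0[OF th] by simp
        obtain m R where h: "\<forall>k. \<bar>b k (w (-t) (w t \<theta>)) - b (k+m) (w t \<theta>)\<bar> \<le> R"
          using bsh[OF th'] False by fastforce
        hence h': "\<forall>k. \<bar>b k \<theta> - b (k+m) (w t \<theta>)\<bar> \<le> R" unfolding wback .
        show ?thesis using Wp_shift[of "\<lambda>k. b k \<theta>" "\<lambda>k. b k (w t \<theta>)" m R c] h' W by blast
      qed
      thus "\<theta> \<in> w t -` {\<theta> \<in> space M. Wp (\<lambda>k. b k \<theta>) c} \<inter> space M" using th th' by simp
    qed
  qed
  have A1: "A \<ge> 1" unfolding A_def using \<eta>0 D1 by simp
  have nabnd: "\<And>\<theta>. \<theta> \<in> space M \<Longrightarrow> \<bar>na n \<theta>\<bar> \<le> A * (real n + 1)" for n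
    unfolding na_def using abnd by simp
  have asup: "\<And>n m \<theta>. \<theta> \<in> space M \<Longrightarrow> a (n+m) \<theta> \<ge> a n \<theta> + a m (S n \<theta>) - D"
  proof -
    fix n m \<theta> assume "\<theta> \<in> space M"
    from aadd[OF this, of n m] show "a (n+m) \<theta> \<ge> a n \<theta> + a m (S n \<theta>) - D" by (simp add: abs_le_iff)
  qed
  have nasup: "\<And>n m \<theta>. \<theta> \<in> space M \<Longrightarrow> na (n+m) \<theta> \<ge> na n \<theta> + na m (S n \<theta>) - D"
  proof -
    fix n m \<theta> assume "\<theta> \<in> space M"
    from aadd[OF this, of n m] show "na (n+m) \<theta> \<ge> na n \<theta> + na m (S n \<theta>) - D" unfolding na_def by (simp add: abs_le_iff)
  qed
  have Lex: "\<exists>L. (\<forall>c<L. measure M {\<theta>\<in>space M. Wp (\<lambda>k. b k \<theta>) c} = 1) \<and>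
                 (\<forall>c>L. measure M {\<theta>\<in>space M. Wp (\<lambda>k. b k \<theta>) c} = 0)"
    if bm: "\<And>k. b k \<in> borel_measurable M"
    and bsh: "\<And>\<theta> s. \<theta> \<in> space M \<Longrightarrow> 0 \<le> s \<Longrightarrow> \<exists>m R. \<forall>k. \<bar>b k (w s \<theta>) - b (k+m) \<theta>\<bar> \<le> R"
    and bb: "\<And>n \<theta>. \<theta> \<in> space M \<Longrightarrow> \<bar>b n \<theta>\<bar> \<le> A * (real n + 1)" for b
  proof (rule Lstar[OF P, where cz="-2*A" and U="2*A"])
    show "\<And>c. {\<theta>\<in>space M. Wp (\<lambda>k. b k \<theta>) c} \<in> sets M" by (rule WSm[OF bm])
    show "\<And>c c'. c \<le> c' \<Longrightarrow> {\<theta>\<in>space M. Wp (\<lambda>k. b k \<theta>) c'} \<subseteq> {\<theta>\<in>space M. Wp (\<lambda>k. b k \<theta>) c}"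
      using Wp_mono by blast
    show "\<And>c. measure M {\<theta>\<in>space M. Wp (\<lambda>k. b k \<theta>) c} = 0 \<or> measure M {\<theta>\<in>space M. Wp (\<lambda>k. b k \<theta>) c} = 1"
      by (rule ergA[OF WSinv[OF bm bsh]])
    have "{\<theta>\<in>space M. Wp (\<lambda>k. b k \<theta>) (-2*A)} = space M"
    proof (intro set_eqI iffI)
      fix \<theta> assume th: "\<theta> \<in> space M"
      have "Wp (\<lambda>k. b k \<theta>) (-2*A)" unfolding Wp_def
      proof (intro allI impI)
        fix e :: real and N :: nat assume e: "e > 0"
        define k where "k = max N 1"
        have k1: "real k \<ge> 1" unfolding k_def by simp
        have "b k \<theta> \<ge> - A * (real k + 1)" using bb[OF th, of k] by linarith
        moreover have "A * (real k + 1) \<le> A * real k + A * real k" using A1 k1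
          by (simp add: algebra_simps)
        moreover have "real k * (-2*A - e) = - (A * real k + A * real k) - real k * e" by (simp add: algebra_simps)
        moreover have "real k * e \<ge> 0" using e by simp
        ultimately have "b k \<theta> \<ge> real k * (-2*A - e)" by linarith
        thus "\<exists>k\<ge>N. real k * (-2*A - e) \<le> b k \<theta>" unfolding k_def by (intro exI[of _ "max N 1"]) (simp add: k_def)
      qed
      thus "\<theta> \<in> {\<theta>\<in>space M. Wp (\<lambda>k. b k \<theta>) (-2*A)}" using th by simp
    qed simp
    thus "measure M {\<theta>\<in>space M. Wp (\<lambda>k. b k \<theta>) (-2*A)} = 1" by (simp add: prob_space)
  next
    fix c assume c1: "measure M {\<theta>\<in>space M. Wp (\<lambda>k. b k \<theta>) c} = 1"
    show "c \<le> 2 * A"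
    proof (rule ccontr)
      assume "\<not> c \<le> 2 * A"
      hence c: "c > 2 * A" by simp
      have "{\<theta>\<in>space M. Wp (\<lambda>k. b k \<theta>) c} = {}"
      proof (intro equals0I)
        fix \<theta> assume "\<theta> \<in> {\<theta>\<in>space M. Wp (\<lambda>k. b k \<theta>) c}"
        hence th: "\<theta> \<in> space M" and W: "Wp (\<lambda>k. b k \<theta>) c" by auto
        have "(c - 2 * A) / 2 > 0" using c by simp
        then obtain k where k: "k \<ge> 1" "b k \<theta> \<ge> real k * (c - (c - 2 * A) / 2)"
          using W unfolding Wp_def by blast
        have k1: "real k \<ge> 1" using k by simp
        have "b k \<theta> \<le> A * (real k + 1)" using bb[OF th, of k] by linarith
        also have "\<dots> \<le> A * real k + A * real k" using A1 k1 by (simp add: algebra_simps)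
        also have "\<dots> < real k * (c - (c - 2 * A) / 2)"
        proof -
          have "real k * (c - (c - 2 * A) / 2) = real k * (2 * A) + real k * ((c - 2 * A) / 2)"
            by (simp add: algebra_simps)
          moreover have "real k * ((c - 2 * A) / 2) > 0" using k1 c by simp
          moreover have "real k * (2 * A) = A * real k + A * real k" by (simp add: algebra_simps)
          ultimately show ?thesis by linarith
        qed
        finally show False using k(2) by simp
      qed
      hence "measure M {\<theta>\<in>space M. Wp (\<lambda>k. b k \<theta>) c} = 0" by (simp only: measure_empty)
      thus False using c1 by simp
    qed
  qed
  obtain La where La1: "\<And>c. c < La \<Longrightarrow> measure M {\<theta>\<in>space M. Wp (\<lambda>k. a k \<theta>) c} = 1"
    and La0: "\<And>c. c > La \<Longrightarrow> measure M {\<theta>\<in>space M. Wp (\<lambda>k. a k \<theta>) c} = 0"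
    using Lex[OF am shA abnd] by blast
  obtain Ln where Ln1: "\<And>c. c < Ln \<Longrightarrow> measure M {\<theta>\<in>space M. Wp (\<lambda>k. na k \<theta>) c} = 1"
    and Ln0: "\<And>c. c > Ln \<Longrightarrow> measure M {\<theta>\<in>space M. Wp (\<lambda>k. na k \<theta>) c} = 0"
    using Lex[OF nam shN nabnd] by blast
  have D0: "D \<ge> 0" using D1 by simp
  have aeW: "AE \<theta> in M. \<forall>N. \<exists>k\<ge>N. b k \<theta> \<ge> real k * (L - e)"
    if bm: "\<And>k. b k \<in> borel_measurable M" and e: "e > 0"
    and L1: "measure M {\<theta>\<in>space M. Wp (\<lambda>k. b k \<theta>) (L - e / 2)} = 1" for b L e
  proof -
    have "AE \<theta> in M. \<theta> \<in> {\<theta>\<in>space M. Wp (\<lambda>k. b k \<theta>) (L - e / 2)}"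
      using L1 by (subst prob_eq_1[symmetric]) (auto intro: WSm[OF bm])
    thus ?thesis
    proof (rule AE_mp, intro AE_I2 impI allI)
      fix \<theta> N assume "\<theta> \<in> {\<theta>\<in>space M. Wp (\<lambda>k. b k \<theta>) (L - e / 2)}"
      hence "Wp (\<lambda>k. b k \<theta>) (L - e / 2)" by simp
      then obtain k where "k \<ge> N" "b k \<theta> \<ge> real k * (L - e / 2 - e / 2)"
        unfolding Wp_def using e by (metis half_gt_zero)
      thus "\<exists>k\<ge>N. b k \<theta> \<ge> real k * (L - e)" by auto
    qed
  qed
  have key: "La + Ln \<le> 4 * e" if e: "e > 0" for e
  proof -
    have "AE \<theta> in M. \<forall>N. \<exists>k\<ge>N. a k \<theta> \<ge> real k * (La - e)"
      by (rule aeW[OF am e La1]) (use e in simp)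
    from KW[OF P Sm Sp S0 Sadd am abnd asup D0 this e]
    obtain N1 where N1: "\<And>n. n \<ge> N1 \<Longrightarrow> (\<integral>\<theta>. a n \<theta> \<partial>M) \<ge> real n * (La - e - e)" by blast
    have "AE \<theta> in M. \<forall>N. \<exists>k\<ge>N. na k \<theta> \<ge> real k * (Ln - e)"
      by (rule aeW[OF nam e Ln1]) (use e in simp)
    from KW[OF P Sm Sp S0 Sadd nam nabnd nasup D0 this e]
    obtain N2 where N2: "\<And>n. n \<ge> N2 \<Longrightarrow> (\<integral>\<theta>. na n \<theta> \<partial>M) \<ge> real n * (Ln - e - e)" by blast
    define n where "n = Suc (max N1 N2)"
    have i1: "(\<integral>\<theta>. a n \<theta> \<partial>M) \<ge> real n * (La - e - e)" by (rule N1) (simp add: n_def)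
    have i2: "(\<integral>\<theta>. na n \<theta> \<partial>M) \<ge> real n * (Ln - e - e)" by (rule N2) (simp add: n_def)
    have i3: "(\<integral>\<theta>. na n \<theta> \<partial>M) = - (\<integral>\<theta>. a n \<theta> \<partial>M)" unfolding na_def by simp
    have "real n * (La + Ln - 4 * e) = real n * (La - e - e) + real n * (Ln - e - e)" by (simp add: algebra_simps)
    also have "\<dots> \<le> 0" using i1 i2 i3 by linarith
    finally have "real n * (La + Ln - 4 * e) \<le> 0" .
    moreover have "real n > 0" unfolding n_def by simp
    ultimately have "La + Ln - 4 * e \<le> 0" by (simp add: mult_le_0_iff)
    thus ?thesis by simp
  qed
  have LL: "La + Ln \<le> 0"
  proof (rule ccontr)
    assume "\<not> La + Ln \<le> 0"
    hence "(La + Ln) / 8 > 0" by simp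
    from key[OF this] \<open>(La + Ln) / 8 > 0\<close> show False by simp
  qed
  define Wa where "Wa j = {\<theta>\<in>space M. Wp (\<lambda>k. a k \<theta>) (La + 1 / real (Suc j))}" for j
  define Wn where "Wn j = {\<theta>\<in>space M. Wp (\<lambda>k. na k \<theta>) (- La + 1 / real (Suc j))}" for j
  define U where "U = (\<Union>j. Wa j \<union> Wn j)"
  define \<Theta>0 where "\<Theta>0 = space M - U"
  have Wam: "Wa j \<in> sets M" for j unfolding Wa_def by (rule WSm[OF am])
  have Wnm: "Wn j \<in> sets M" for j unfolding Wn_def by (rule WSm[OF nam])
  have Um: "U \<in> sets M" unfolding U_def using Wam Wnm by auto
  have Wa0: "measure M (Wa j) = 0" for j unfolding Wa_def by (rule La0) simp
  have Wn0: "measure M (Wn j) = 0" for j unfolding Wn_def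
  proof (rule Ln0)
    have "1 / real (Suc j) > 0" by simp
    thus "- La + 1 / real (Suc j) > Ln" using LL by linarith
  qed
  have "AE \<theta> in M. \<theta> \<notin> U"
  proof -
    have "\<forall>j. AE \<theta> in M. \<theta> \<notin> Wa j \<union> Wn j"
    proof
      fix j
      have "AE \<theta> in M. \<theta> \<notin> Wa j" using Wa0[of j] prob_eq_0[OF Wam] by simp
      moreover have "AE \<theta> in M. \<theta> \<notin> Wn j" using Wn0[of j] prob_eq_0[OF Wnm] by simp
      ultimately show "AE \<theta> in M. \<theta> \<notin> Wa j \<union> Wn j" by eventually_elim simp
    qed
    hence "AE \<theta> in M. \<forall>j. \<theta> \<notin> Wa j \<union> Wn j" by (simp add: AE_all_countable)
    thus ?thesis unfolding U_def by simp
  qed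
  hence U0: "measure M U = 0" using prob_eq_0[OF Um] by simp
  have T1: "measure M \<Theta>0 = 1" unfolding \<Theta>0_def using prob_compl[OF Um] U0 by simp
  have Tm: "\<Theta>0 \<in> sets M" unfolding \<Theta>0_def using Um by auto
  have conv_nat: "\<exists>N. \<forall>k\<ge>N. \<bar>a k \<theta> - real k * La\<bar> \<le> real k * \<epsilon>"
    if th: "\<theta> \<in> \<Theta>0" and \<epsilon>: "\<epsilon> > 0" for \<theta> \<epsilon>
  proof -
    obtain j where j: "1 / real (Suc j) < \<epsilon>"
      using reals_Archimedean \<epsilon> by (metis inverse_eq_divide)
    have ths: "\<theta> \<in> space M" and nW: "\<theta> \<notin> Wa j" "\<theta> \<notin> Wn j" using th unfolding \<Theta>0_def U_def by auto
    from nW(1) ths have "\<not> Wp (\<lambda>k. a k \<theta>) (La + 1 / real (Suc j))" unfolding Wa_def by simp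
    then obtain e1 where e1: "e1 > 0" and "\<not> (\<forall>N. \<exists>k\<ge>N. a k \<theta> \<ge> real k * (La + 1 / real (Suc j) - e1))"
      unfolding Wp_def by blast
    then obtain N1 where "\<forall>k\<ge>N1. \<not> (a k \<theta> \<ge> real k * (La + 1 / real (Suc j) - e1))" by blast
    hence N1: "\<And>k. k \<ge> N1 \<Longrightarrow> a k \<theta> < real k * (La + 1 / real (Suc j) - e1)" by (simp add: not_le)
    from nW(2) ths have "\<not> Wp (\<lambda>k. na k \<theta>) (- La + 1 / real (Suc j))" unfolding Wn_def by simp
    then obtain e2 where e2: "e2 > 0" and "\<not> (\<forall>N. \<exists>k\<ge>N. na k \<theta> \<ge> real k * (- La + 1 / real (Suc j) - e2))"
      unfolding Wp_def by blast
    then obtain N2 where "\<forall>k\<ge>N2. \<not> (na k \<theta> \<ge> real k * (- La + 1 / real (Suc j) - e2))" by blast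
    hence N2: "\<And>k. k \<ge> N2 \<Longrightarrow> na k \<theta> < real k * (- La + 1 / real (Suc j) - e2)" by (simp add: not_le)
    show ?thesis
    proof (intro exI allI impI)
      fix k assume k: "max N1 N2 \<le> k"
      have u: "a k \<theta> \<le> real k * (La + \<epsilon>)"
      proof -
        have "real k * (La + 1 / real (Suc j) - e1) \<le> real k * (La + \<epsilon>)" using j e1 by (intro mult_left_mono) auto
        thus ?thesis using N1[of k] k by simp
      qed
      have l: "- a k \<theta> \<le> real k * (- La + \<epsilon>)"
      proof -
        have "real k * (- La + 1 / real (Suc j) - e2) \<le> real k * (- La + \<epsilon>)" using j e2 by (intro mult_left_mono) auto
        thus ?thesis using N2[of k] k unfolding na_def by simp
      qed
      have q1: "real k * (La + \<epsilon>) = real k * La + real k * \<epsilon>" by (simp add: algebra_simps)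
      have q2: "real k * (- La + \<epsilon>) = - (real k * La) + real k * \<epsilon>" by (simp add: algebra_simps)
      have r1: "a k \<theta> - real k * La \<le> real k * \<epsilon>" using q1 u by linarith
      have r2: "- (a k \<theta> - real k * La) \<le> real k * \<epsilon>" using q2 l by linarith
      show "\<bar>a k \<theta> - real k * La\<bar> \<le> real k * \<epsilon>" using r1 r2 by (simp only: abs_le_iff)
    qed
  qed
  have conv: "((\<lambda>t. (\<psi> t \<theta> x - x) / t) \<longlongrightarrow> La) at_top" if th: "\<theta> \<in> \<Theta>0" for \<theta> x
  proof (rule tendstoI)
    fix \<epsilon> :: real assume \<epsilon>: "\<epsilon> > 0"
    have ths: "\<theta> \<in> space M" using th unfolding \<Theta>0_def by auto
    obtain N where N: "\<And>k. k \<ge> N \<Longrightarrow> \<bar>a k \<theta> - real k * La\<bar> \<le> real k * (\<epsilon> / 2)"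
      using conv_nat[OF th, of "\<epsilon> / 2"] \<epsilon> by auto
    define K where "K = \<bar>La\<bar> + \<eta> + D"
    define T0 where "T0 = max (real N + 1) (2 * K / \<epsilon> + 1)"
    show "eventually (\<lambda>t. dist ((\<psi> t \<theta> x - x) / t) La < \<epsilon>) at_top"
      unfolding eventually_at_top_linorder
    proof (intro exI allI impI)
      fix t assume t: "t \<ge> T0"
      have tN: "t \<ge> real N + 1" and tK: "t \<ge> 2 * K / \<epsilon> + 1" using t unfolding T0_def by auto
      have K0: "K \<ge> 0" unfolding K_def using \<eta>0 D1 by simp
      have tpos: "t > 0" using tN by linarith
      define n where "n = nat \<lfloor>t\<rfloor>"
      have rn: "real n = real_of_int \<lfloor>t\<rfloor>" unfolding n_def using tpos by simp
      have n1: "real n \<le> t" "t < real n + 1" unfolding rn by linarith+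
      have nN: "n \<ge> N"
      proof -
        have "real N + 1 \<le> t" by (rule tN)
        hence "real N < real n + 1" using n1 by linarith
        thus ?thesis by simp
      qed
      have e1: "\<bar>\<psi> t \<theta> x - x - a n \<theta>\<bar> \<le> \<eta> + D" unfolding n_def by (rule rt[OF ths]) (use tpos in simp)
      have e2: "\<bar>a n \<theta> - real n * La\<bar> \<le> real n * (\<epsilon> / 2)" by (rule N[OF nN])
      have e3: "real n * (\<epsilon> / 2) \<le> t * (\<epsilon> / 2)" using n1 \<epsilon> by (intro mult_right_mono) auto
      have e4: "\<bar>real n * La - t * La\<bar> \<le> \<bar>La\<bar>"
      proof -
        have "real n * La - t * La = (real n - t) * La" by (simp add: algebra_simps)
        hence "\<bar>real n * La - t * La\<bar> = \<bar>real n - t\<bar> * \<bar>La\<bar>" by (simp only: abs_mult)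
        also have "\<dots> \<le> 1 * \<bar>La\<bar>" using n1 by (intro mult_right_mono) auto
        finally show ?thesis by simp
      qed
      have e5: "t * (\<epsilon> / 2) > K"
      proof -
        have "2 * K / \<epsilon> < t" using tK by linarith
        hence "2 * K < t * \<epsilon>" using \<epsilon> by (simp add: field_simps)
        thus ?thesis by simp
      qed
      have main: "\<bar>\<psi> t \<theta> x - x - t * La\<bar> < t * \<epsilon>"
      proof -
        from e1 have f1: "\<psi> t \<theta> x - x - a n \<theta> \<le> \<eta> + D" "- (\<psi> t \<theta> x - x - a n \<theta>) \<le> \<eta> + D"
          by (simp_all only: abs_le_iff)
        from e2 have f2: "a n \<theta> - real n * La \<le> real n * (\<epsilon> / 2)" "- (a n \<theta> - real n * La) \<le> real n * (\<epsilon> / 2)"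
          by (simp_all only: abs_le_iff)
        from e4 have f4: "real n * La - t * La \<le> \<bar>La\<bar>" "- (real n * La - t * La) \<le> \<bar>La\<bar>"
          by (simp_all only: abs_le_iff)
        have g: "\<eta> + D + \<bar>La\<bar> < t * (\<epsilon> / 2)" using e5 unfolding K_def by simp
        have h1: "\<psi> t \<theta> x - x - t * La < t * \<epsilon>" using f1(1) f2(1) f4(1) e3 g by linarith
        have h2: "- (\<psi> t \<theta> x - x - t * La) < t * \<epsilon>" using f1(2) f2(2) f4(2) e3 g by linarith
        show ?thesis using h1 h2 by (simp only: abs_less_iff)
      qed
      have q: "(\<psi> t \<theta> x - x) / t - La = (\<psi> t \<theta> x - x - t * La) / t"
        using tpos by (simp add: diff_divide_distrib)
      have "dist ((\<psi> t \<theta> x - x) / t) La = \<bar>(\<psi> t \<theta> x - x - t * La) / t\<bar>"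
        unfolding dist_real_def q by (rule refl)
      also have "\<dots> = \<bar>\<psi> t \<theta> x - x - t * La\<bar> / t" using tpos by simp
      also have "\<dots> < \<epsilon>" using main tpos by (simp add: divide_less_eq mult.commute)
      finally show "dist ((\<psi> t \<theta> x - x) / t) La < \<epsilon>" .
    qed
  qed
  show ?thesis
  proof (intro exI conjI ballI allI)
    show "\<Theta>0 \<subseteq> space M" unfolding \<Theta>0_def by auto
    show "\<Theta>0 \<in> sets M" by (rule Tm)
    show "measure M \<Theta>0 = 1" by (rule T1)
    fix \<theta> x assume "\<theta> \<in> \<Theta>0"
    thus "((\<lambda>t. (\<psi> t \<theta> x - x) / t) \<longlongrightarrow> La) at_top" by (rule conv)
  qed
qed
end
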